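(* For integers $j\ge 1$ let $$I_j=\left[\binom{j+1}{2}^{-1},\binom{j}{2}^{-1}\right)$$ (with the convention $\binom{1}{2}^{-1}=\infty$), and for $\rho>0$ let $\alpha_j(\rho)=1/j+\rho(j-1)/2$ and $\beta_j(\rho)=1/j+\rho(j+1)/2$. Assume $\rho\in I_{j+1}$ for some $j\ge 1$, and let $\rho'=\rho/[1-\alpha_{j+1}(\rho)]$. Then (1) $\rho<\alpha_{j+1}(\rho)$; (2) $\rho'\in I_j$; (3) $\beta_j(\rho')=[1/\alpha_{j+1}(\rho)-1]^{-1}$; (4) $\alpha_{j+1}(\rho)+\rho=\beta_{j+1}(\rho)$. *)

theory Defs
  imports Complex_Main
begin

definition in_I :: "nat \<Rightarrow> real \<Rightarrow> bool" where
  "in_I j \<rho> \<longleftrightarrow> 1 / real ((j+1) choose 2) \<le> \<rho> \<and>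
                   (j = 1 \<or> \<rho> < 1 / real (j choose 2))"

definition alpha :: "nat \<Rightarrow> real \<Rightarrow> real" where
  "alpha j \<rho> = 1 / real j + \<rho> * (real j - 1) / 2"

definition beta :: "nat \<Rightarrow> real \<Rightarrow> real" where
  "beta j \<rho> = 1 / real j + \<rho> * (real j + 1) / 2"

end

theory Submission
  imports Defs
begin

lemma ch2: "real (m choose 2) = real m * (real m - 1) / 2"
proof (cases m)
  case 0 then show ?thesis by simp
next
  case (Suc k)
  have "m choose 2 = m * (m - 1) div 2" by (simp add: choose_two)
  moreover have "even (m * (m - 1))" by auto
  ultimately have "2 * (m choose 2) = m * (m - 1)" by simp
  then have "2 * real (m choose 2) = real m * real (m - 1)"
    by (metis of_nat_mult of_nat_numeral)
  then show ?thesis using Suc by (simp add: of_nat_diff)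
qed

lemma fle: "0<b \<Longrightarrow> 0<d \<Longrightarrow> a*d \<le> c*b \<Longrightarrow> a/b \<le> (c::real)/d"
  by (simp add: divide_simps)
lemma flt: "0<b \<Longrightarrow> 0<d \<Longrightarrow> a*d < c*b \<Longrightarrow> a/b < (c::real)/d"
  by (simp add: divide_simps)

theorem lemma2:
  fixes j :: nat and \<rho> :: real
  assumes "j \<ge> 1" and "\<rho> > 0" and "in_I (j+1) \<rho>"
  defines "\<rho>' \<equiv> \<rho> / (1 - alpha (j+1) \<rho>)"
  shows "\<rho> < alpha (j+1) \<rho> \<and> in_I j \<rho>' \<and>
         beta j \<rho>' = inverse (1 / alpha (j+1) \<rho> - 1) \<and>
         alpha (j+1) \<rho> + \<rho> = beta (j+1) \<rho>"
proof -
  define n where "n = real j"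
  have n1: "n \<ge> 1" using assms(1) by (simp add: n_def)
  have c1: "real ((j+1+1) choose 2) = (n+2)*(n+1)/2" unfolding ch2 n_def by (simp add: algebra_simps)
  have c2: "real ((j+1) choose 2) = (n+1)*n/2" unfolding ch2 n_def by (simp add: algebra_simps)
  have c3: "real (j choose 2) = n*(n-1)/2" unfolding ch2 n_def by simp
  from assms(3) have lo: "2 / ((n+2)*(n+1)) \<le> \<rho>" and hi: "\<rho> < 2/((n+1)*n)"
    unfolding in_I_def c1 c2 using assms(1) by auto
  have lo': "2 \<le> \<rho> * ((n+2)*(n+1))" using lo n1 by (simp add: pos_divide_le_eq)
  have hi': "\<rho> * ((n+1)*n) < 2" using hi n1 by (simp add: pos_less_divide_eq)
  have al: "alpha (j+1) \<rho> = 1/(n+1) + \<rho>*n/2" unfolding alpha_def n_def by simp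
  have b1: "beta (j+1) \<rho> = 1/(n+1) + \<rho>*(n+2)/2" unfolding beta_def n_def by (simp add: add.commute)
  have bj: "\<And>x. beta j x = 1/n + x*(n+1)/2" unfolding beta_def n_def by simp
  have pos: "\<rho>*(n+1) < 2" using hi' n1 assms(2)
  proof -
    have "\<rho>*(n+1)*1 \<le> \<rho>*(n+1)*n" using n1 assms(2) by (intro mult_left_mono) auto
    then show ?thesis using hi' by (simp add: algebra_simps)
  qed
  have oma: "1 - alpha (j+1) \<rho> = n*(2 - \<rho>*(n+1))/(2*(n+1))"
    unfolding al using n1 by (simp add: field_simps)
  have omapos: "1 - alpha (j+1) \<rho> > 0" unfolding oma using n1 pos by simp
  have rp: "\<rho>' = 2*(n+1)*\<rho> / (n*(2 - \<rho>*(n+1)))"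
    unfolding \<rho>'_def oma using n1 pos by (simp add: field_simps)
  have d: "n*(2 - \<rho>*(n+1)) > 0" using n1 pos by simp
  have P1: "\<rho> < alpha (j+1) \<rho>"
  proof (cases "j = 1")
    case True
    then have "n = 1" by (simp add: n_def)
    then show ?thesis unfolding al using hi' by simp
  next
    case False
    then have "n \<ge> 2" using assms(1) by (simp add: n_def)
    then have "\<rho> \<le> \<rho>*n/2" using assms(2) by (simp add: field_simps)
    moreover have "1/(n+1) > 0" using n1 by simp
    ultimately show ?thesis unfolding al by linarith
  qed
  have P2a: "1 / real ((j+1) choose 2) \<le> \<rho>'"
  proof -
    have e: "0 \<le> (n+1)*(n+1)*\<rho> - (2 - \<rho>*(n+1))" using lo' by (simp add: algebra_simps)
    have "0 \<le> n * ((n+1)*(n+1)*\<rho> - (2 - \<rho>*(n+1)))" using e n1 by simp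
    then have "2 * (n*(2 - \<rho>*(n+1))) \<le> 2*(n+1)*\<rho> * ((n+1)*n)" by (simp add: algebra_simps)
    then have "2 / ((n+1)*n) \<le> 2*(n+1)*\<rho> / (n*(2 - \<rho>*(n+1)))"
      using d n1 by (intro fle) auto
    then show ?thesis unfolding c2 rp by simp
  qed
  have P2b: "j = 1 \<or> \<rho>' < 1 / real (j choose 2)"
  proof (cases "j = 1")
    case False
    then have n2: "n \<ge> 2" using assms(1) by (simp add: n_def)
    have e: "0 < 2 - \<rho>*(n+1) - (n+1)*\<rho>*(n-1)" using hi' by (simp add: algebra_simps)
    have "0 < n * (2 - \<rho>*(n+1) - (n+1)*\<rho>*(n-1))" using e n2 by simp
    then have "2*(n+1)*\<rho> * (n*(n-1)) < 2 * (n*(2 - \<rho>*(n+1)))" by (simp add: algebra_simps)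
    moreover have "0 < n*(n-1)" using n2 by simp
    ultimately have "2*(n+1)*\<rho> / (n*(2 - \<rho>*(n+1))) < 2/(n*(n-1))"
      using d by (intro flt) auto
    then have "\<rho>' < 2/(n*(n-1))" unfolding rp .
    then show ?thesis unfolding c3 by simp
  qed simp
  have P3: "beta j \<rho>' = inverse (1 / alpha (j+1) \<rho> - 1)"
  proof -
    have ap: "alpha (j+1) \<rho> > 0" using P1 assms(2) by simp
    have "inverse (1 / alpha (j+1) \<rho> - 1) = alpha (j+1) \<rho> / (1 - alpha (j+1) \<rho>)"
      using ap omapos by (simp add: field_simps)
    also have "\<dots> = beta j \<rho>'"
    proof -
      define A where "A = 1 - alpha (j+1) \<rho>"
      have Ap: "A > 0" using omapos A_def by simp
      have key: "n * alpha (j+1) \<rho> = A + n*\<rho>*(n+1)/2"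
        unfolding A_def al using n1 by (simp add: field_simps)
      have "beta j \<rho>' = 1/n + (\<rho>/A)*(n+1)/2" unfolding bj \<rho>'_def A_def by simp
      also have "\<dots> = (A + n*\<rho>*(n+1)/2) / (n*A)" using Ap n1 by (simp add: field_simps)
      also have "\<dots> = alpha (j+1) \<rho> / A" unfolding key[symmetric] using Ap n1 by simp
      finally show ?thesis unfolding A_def by simp
    qed
    finally show ?thesis by simp
  qed
  have P4: "alpha (j+1) \<rho> + \<rho> = beta (j+1) \<rho>" unfolding al b1 by (simp add: field_simps)
  show ?thesis using P1 P2a P2b P3 P4 unfolding in_I_def by simp
qed

end
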